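(* Let $(\alpha,\beta)\in\mathbb{R}^2\setminus\{(0,0)\}$ and let $\overline y$ be the solution of $\ddot y+3y+\frac32y^3=0$, $y(0)=\alpha$, $\dot y(0)=\beta$, with energy $E_1=\frac{\beta^2}{2}+\frac32\alpha^2+\frac38\alpha^4$. Then $\overline y$ is torsionally stable, i.e. the trivial solution of the Hill equation $\ddot\xi+\big(7+\frac{27}{2}\overline y(t)^2\big)\xi=0$ is stable in the Lyapunov sense, provided that $\|\overline y\|_\infty\le\sqrt{10/21}$ or, equivalently, provided that $E_1\le\frac{235}{294}$.
   Context: $\overline y$ is the first vertical mode of the one-mode system $\ddot y_1+3y_1+\frac32y_1^3+\frac92y_1z_1^2=0$, $\ddot z_1+7z_1+\frac92z_1^3+\frac{27}{2}z_1y_1^2=0$ (the solution with $z_1\equiv0$), and the Hill equation is the linearization of the $z_1$-equation around $(\overline y,0)$. Stability of the trivial solution means that solutions with small $|\xi(0)|,|\dot\xi(0)|$ remain small for all $t\ge0$. *)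

theory Defs
  imports "HOL-Analysis.Analysis"
begin

definition hill_solution :: "(real \<Rightarrow> real) \<Rightarrow> (real \<Rightarrow> real) \<Rightarrow> (real \<Rightarrow> real) \<Rightarrow> bool" where
  "hill_solution q \<xi> \<xi>' \<longleftrightarrow>
     (\<forall>t. (\<xi> has_real_derivative \<xi>' t) (at t) \<and> (\<xi>' has_real_derivative (- q t * \<xi> t)) (at t))"

definition hill_lyapunov_stable :: "(real \<Rightarrow> real) \<Rightarrow> bool" where
  "hill_lyapunov_stable q \<longleftrightarrow>
     (\<forall>\<epsilon>>0. \<exists>\<delta>>0. \<forall>\<xi> \<xi>'. hill_solution q \<xi> \<xi>' \<and> \<bar>\<xi> 0\<bar> < \<delta> \<and> \<bar>\<xi>' 0\<bar> < \<delta> \<longrightarrow>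
        (\<forall>t\<ge>0. \<bar>\<xi> t\<bar> < \<epsilon> \<and> \<bar>\<xi>' t\<bar> < \<epsilon>))"

end

theory Submission
  imports Defs
begin

lemma hs_lin:
  assumes "hill_solution q \<xi> \<xi>'" "hill_solution q \<eta> \<eta>'"
  shows "hill_solution q (\<lambda>t. c * \<xi> t + d * \<eta> t) (\<lambda>t. c * \<xi>' t + d * \<eta>' t)"
  unfolding hill_solution_def
proof
  fix t
  have 1: "(\<xi> has_real_derivative \<xi>' t) (at t)" "(\<xi>' has_real_derivative (- q t * \<xi> t)) (at t)"
    "(\<eta> has_real_derivative \<eta>' t) (at t)" "(\<eta>' has_real_derivative (- q t * \<eta> t)) (at t)"
    using assms unfolding hill_solution_def by auto
  have "((\<lambda>t. c * \<xi> t + d * \<eta> t) has_real_derivative c * \<xi>' t + d * \<eta>' t) (at t)"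
    by (intro DERIV_add DERIV_cmult 1)
  moreover have "((\<lambda>t. c * \<xi>' t + d * \<eta>' t) has_real_derivative c * (- q t * \<xi> t) + d * (- q t * \<eta> t)) (at t)"
    by (intro DERIV_add DERIV_cmult 1)
  moreover have "c * (- q t * \<xi> t) + d * (- q t * \<eta> t) = - q t * (c * \<xi> t + d * \<eta> t)"
    by (simp add: algebra_simps)
  ultimately show "((\<lambda>t. c * \<xi> t + d * \<eta> t) has_real_derivative c * \<xi>' t + d * \<eta>' t) (at t) \<and>
     ((\<lambda>t. c * \<xi>' t + d * \<eta>' t) has_real_derivative - q t * (c * \<xi> t + d * \<eta> t)) (at t)" by simp
qed

lemma hs_shift:
  assumes "hill_solution q \<xi> \<xi>'" "\<forall>t. q (t + T) = q t"
  shows "hill_solution q (\<lambda>t. \<xi> (t + T)) (\<lambda>t. \<xi>' (t + T))"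
  unfolding hill_solution_def
proof
  fix t
  have 1: "(\<xi> has_real_derivative \<xi>' (t+T)) (at (t+T))" "(\<xi>' has_real_derivative (- q (t+T) * \<xi> (t+T))) (at (t+T))"
    using assms(1) unfolding hill_solution_def by blast+
  have qq: "q (t+T) = q t" using assms(2) by simp
  show "((\<lambda>t. \<xi> (t + T)) has_real_derivative \<xi>' (t + T)) (at t) \<and>
         ((\<lambda>t. \<xi>' (t + T)) has_real_derivative - q t * \<xi> (t + T)) (at t)"
    using 1 unfolding qq by (simp add: DERIV_shift[symmetric])
qed

lemma hs_wronskian:
  assumes "hill_solution q \<xi> \<xi>'" "hill_solution q \<eta> \<eta>'"
  shows "\<xi> t * \<eta>' t - \<xi>' t * \<eta> t = \<xi> s * \<eta>' s - \<xi>' s * \<eta> s"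
proof -
  have "\<forall>x. ((\<lambda>t. \<xi> t * \<eta>' t - \<xi>' t * \<eta> t) has_real_derivative 0) (at x)"
  proof
    fix x
    have 1: "(\<xi> has_real_derivative \<xi>' x) (at x)" "(\<xi>' has_real_derivative (- q x * \<xi> x)) (at x)"
      "(\<eta> has_real_derivative \<eta>' x) (at x)" "(\<eta>' has_real_derivative (- q x * \<eta> x)) (at x)"
      using assms unfolding hill_solution_def by auto
    have "((\<lambda>t. \<xi> t * \<eta>' t - \<xi>' t * \<eta> t) has_real_derivative
       (\<xi> x * (- q x * \<eta> x) + \<xi>' x * \<eta>' x) - (\<xi>' x * \<eta>' x + (- q x * \<xi> x) * \<eta> x)) (at x)"
      by (intro DERIV_diff 1 DERIV_mult')
    then show "((\<lambda>t. \<xi> t * \<eta>' t - \<xi>' t * \<eta> t) has_real_derivative 0) (at x)"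
      by (simp add: algebra_simps)
  qed
  then show ?thesis by (rule DERIV_isconst_all)
qed

lemma hs_uniq:
  assumes "hill_solution q \<xi> \<xi>'" "\<forall>t. \<bar>q t\<bar> \<le> K" "\<xi> s = 0" "\<xi>' s = 0"
  shows "\<xi> t = 0 \<and> \<xi>' t = 0"
proof -
  define L where "L = 1 + \<bar>K\<bar>"
  define e where "e t = (\<xi> t)^2 + (\<xi>' t)^2" for t
  have e0: "e s = 0" using assms by (simp add: e_def)
  have enn: "e t \<ge> 0" for t by (simp add: e_def)
  have de: "(e has_real_derivative 2 * (1 - q x) * \<xi> x * \<xi>' x) (at x)" for x
  proof -
    have 1: "(\<xi> has_real_derivative \<xi>' x) (at x)" "(\<xi>' has_real_derivative (- q x * \<xi> x)) (at x)"
      using assms unfolding hill_solution_def by auto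
    have "((\<lambda>t. \<xi> t * \<xi> t + \<xi>' t * \<xi>' t) has_real_derivative
       (\<xi> x * \<xi>' x + \<xi>' x * \<xi> x) + (\<xi>' x * (- q x * \<xi> x) + (- q x * \<xi> x) * \<xi>' x)) (at x)"
      by (intro DERIV_add 1 DERIV_mult')
    then show ?thesis unfolding e_def[abs_def] power2_eq_square
      by (simp add: algebra_simps)
  qed
  have bnd: "\<bar>2 * (1 - q x) * \<xi> x * \<xi>' x\<bar> \<le> L * e x" for x
  proof -
    have "\<bar>1 - q x\<bar> \<le> L" using assms(2)[rule_format, of x] by (simp add: L_def abs_le_iff)
    moreover have "\<bar>2 * \<xi> x * \<xi>' x\<bar> \<le> e x"
    proof -
      have "2 * \<bar>\<xi> x\<bar> * \<bar>\<xi>' x\<bar> \<le> \<bar>\<xi> x\<bar>^2 + \<bar>\<xi>' x\<bar>^2" by (rule sum_squares_bound)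
      then show ?thesis unfolding e_def by (simp add: abs_mult)
    qed
    ultimately have "\<bar>1 - q x\<bar> * \<bar>2 * \<xi> x * \<xi>' x\<bar> \<le> L * e x"
      by (intro mult_mono) (auto simp: L_def)
    moreover have "\<bar>2 * (1 - q x) * \<xi> x * \<xi>' x\<bar> = \<bar>1 - q x\<bar> * \<bar>2 * \<xi> x * \<xi>' x\<bar>"
    proof -
      have "2 * (1 - q x) * \<xi> x * \<xi>' x = (1 - q x) * (2 * \<xi> x * \<xi>' x)" by (simp add: algebra_simps)
      then show ?thesis by (simp only: abs_mult)
    qed
    ultimately show ?thesis by linarith
  qed
  have exp_der: "((\<lambda>x. exp (c * x)) has_real_derivative exp (c * x) * c) (at x)" for c x
    by (auto intro!: derivative_eq_intros)
  have "e t = 0"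
  proof (cases "s \<le> t")
    case True
    have "(\<lambda>x. e x * exp (- L * x)) t \<le> (\<lambda>x. e x * exp (- L * x)) s"
    proof (rule DERIV_nonpos_imp_nonincreasing[OF True])
      fix x
      have "((\<lambda>x. e x * exp (- L * x)) has_real_derivative
              e x * (exp (- L * x) * (- L)) + (2 * (1 - q x) * \<xi> x * \<xi>' x) * exp (- L * x)) (at x)"
        by (intro DERIV_mult' de exp_der)
      moreover have "e x * (exp (- L * x) * (- L)) + (2 * (1 - q x) * \<xi> x * \<xi>' x) * exp (- L * x) \<le> 0"
      proof -
        have "(2 * (1 - q x) * \<xi> x * \<xi>' x - L * e x) * exp (- L * x) \<le> 0"
          using bnd[of x] by (intro mult_nonpos_nonneg) auto
        then show ?thesis by (simp add: algebra_simps)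
      qed
      ultimately show "\<exists>y. ((\<lambda>x. e x * exp (- L * x)) has_real_derivative y) (at x) \<and> y \<le> 0" by blast
    qed
    then have "e t * exp (- L * t) \<le> 0" using e0 by simp
    then show ?thesis using enn[of t] by (simp add: mult_le_0_iff)
  next
    case False
    then have ts: "t \<le> s" by simp
    have "(\<lambda>x. e x * exp (L * x)) t \<le> (\<lambda>x. e x * exp (L * x)) s"
    proof (rule DERIV_nonneg_imp_nondecreasing[OF ts])
      fix x
      have "((\<lambda>x. e x * exp (L * x)) has_real_derivative
              e x * (exp (L * x) * L) + (2 * (1 - q x) * \<xi> x * \<xi>' x) * exp (L * x)) (at x)"
        by (intro DERIV_mult' de exp_der)
      moreover have "e x * (exp (L * x) * L) + (2 * (1 - q x) * \<xi> x * \<xi>' x) * exp (L * x) \<ge> 0"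
      proof -
        have "(2 * (1 - q x) * \<xi> x * \<xi>' x + L * e x) * exp (L * x) \<ge> 0"
          using bnd[of x] by (intro mult_nonneg_nonneg) auto
        then show ?thesis by (simp add: algebra_simps)
      qed
      ultimately show "\<exists>y. ((\<lambda>x. e x * exp (L * x)) has_real_derivative y) (at x) \<and> y \<ge> 0" by blast
    qed
    then have "e t * exp (L * t) \<le> 0" using e0 by simp
    then show ?thesis using enn[of t] by (simp add: mult_le_0_iff)
  qed
  then show ?thesis unfolding e_def by (simp add: add_nonneg_eq_0_iff)
qed




lemma hs_neg:
  assumes "hill_solution q \<xi> \<xi>'"
  shows "hill_solution q (\<lambda>t. - \<xi> t) (\<lambda>t. - \<xi>' t)"
  using hs_lin[OF assms assms, of "-1" 0] by simp

lemma hs_der: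
  assumes "hill_solution q \<xi> \<xi>'"
  shows "(\<xi> has_real_derivative \<xi>' t) (at t)" "(\<xi>' has_real_derivative (- q t * \<xi> t)) (at t)"
  using assms unfolding hill_solution_def by blast+

lemma hs_cont:
  assumes "hill_solution q \<xi> \<xi>'"
  shows "continuous_on S \<xi>" "continuous_on S \<xi>'"
  using hs_der[OF assms] by (meson DERIV_isCont continuous_at_imp_continuous_on)+

lemma sturm_lower_pos:
  assumes hs: "hill_solution q \<xi> \<xi>'" and w: "w > 0" and qa: "\<forall>t. w^2 \<le> q t"
    and pos: "\<forall>t\<in>{c..c+pi/w}. \<xi> t > 0"
  shows False
proof -
  define W where "W t = \<xi>' t * sin (w * (t - c)) - \<xi> t * (w * cos (w * (t - c)))" for t
  have dW: "(W has_real_derivative (w^2 - q t) * \<xi> t * sin (w * (t - c))) (at t)" for t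
  proof -
    have s: "((\<lambda>t. sin (w * (t - c))) has_real_derivative cos (w * (t - c)) * w) (at t)"
      by (auto intro!: derivative_eq_intros)
    have co: "((\<lambda>t. w * cos (w * (t - c))) has_real_derivative w * (- sin (w * (t - c)) * w)) (at t)"
      by (auto intro!: derivative_eq_intros)
    have "(W has_real_derivative
      (\<xi>' t * (cos (w * (t - c)) * w) + (- q t * \<xi> t) * sin (w * (t - c)))
      - (\<xi> t * (w * (- sin (w * (t - c)) * w)) + \<xi>' t * (w * cos (w * (t - c))))) (at t)"
      unfolding W_def[abs_def] by (intro DERIV_diff DERIV_mult' hs_der[OF hs] s co)
    then show ?thesis by (simp add: algebra_simps power2_eq_square)
  qed
  have cb: "c \<le> c + pi / w" using w by (simp add: pi_ge_zero)
  have "W (c + pi / w) \<le> W c"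
  proof (rule DERIV_nonpos_imp_nonincreasing[OF cb])
    fix x assume x: "c \<le> x" "x \<le> c + pi / w"
    have "0 \<le> w * (x - c)" using x w by simp
    moreover have "w * (x - c) \<le> pi" using x w by (simp add: field_simps)
    ultimately have "sin (w * (x - c)) \<ge> 0" by (rule sin_ge_zero)
    moreover have "\<xi> x > 0" using pos x by auto
    moreover have "w^2 - q x \<le> 0" using qa by simp
    ultimately have "(w^2 - q x) * \<xi> x * sin (w * (x - c)) \<le> 0"
      by (simp add: mult_nonpos_nonneg)
    then show "\<exists>y. (W has_real_derivative y) (at x) \<and> y \<le> 0" using dW by blast
  qed
  moreover have "W c = - w * \<xi> c" by (simp add: W_def)
  moreover have "W (c + pi / w) = w * \<xi> (c + pi / w)" using w by (simp add: W_def)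
  moreover have "\<xi> c > 0" "\<xi> (c + pi / w) > 0" using pos cb by auto
  moreover have "w * \<xi> c > 0" "w * \<xi> (c + pi / w) > 0" using w \<open>\<xi> c > 0\<close> \<open>\<xi> (c + pi / w) > 0\<close> by simp_all
  ultimately show False by linarith
qed

lemma sturm_lower:
  assumes hs: "hill_solution q \<xi> \<xi>'" and w: "w > 0" and qa: "\<forall>t. w^2 \<le> q t"
  shows "\<exists>t\<in>{c..c+pi/w}. \<xi> t = 0"
proof (rule ccontr)
  assume nz: "\<not> (\<exists>t\<in>{c..c+pi/w}. \<xi> t = 0)"
  have cb: "c \<le> c + pi / w" using w by (simp add: pi_ge_zero)
  have allpos: "\<forall>t\<in>{c..c+pi/w}. \<eta> t > 0" if hse: "hill_solution q \<eta> \<eta>'" and nze: "\<forall>t\<in>{c..c+pi/w}. \<eta> t \<noteq> 0"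
    and c0: "\<eta> c > 0" for \<eta> \<eta>'
  proof
    fix t assume t: "t \<in> {c..c+pi/w}"
    show "\<eta> t > 0"
    proof (rule ccontr)
      assume "\<not> \<eta> t > 0"
      then have "\<eta> t \<le> 0" by simp
      then obtain z where "c \<le> z" "z \<le> t" "\<eta> z = 0"
        using IVT2'[of \<eta> t 0 c, OF _ _ _ hs_cont(1)[OF hse]] c0 t by auto
      then show False using nze t by auto
    qed
  qed
  have "\<xi> c \<noteq> 0" using nz cb by auto
  then show False
  proof (cases "\<xi> c > 0")
    case True
    then show False using sturm_lower_pos[OF hs w qa allpos[OF hs _ True]] nz by auto
  next
    case False
    with \<open>\<xi> c \<noteq> 0\<close> have "- \<xi> c > 0" by simp
    then show False using sturm_lower_pos[OF hs_neg[OF hs] w qa allpos[OF hs_neg[OF hs] _ \<open>- \<xi> c > 0\<close>]] nz by auto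
  qed
qed




lemma half_min:
  fixes a b :: real
  assumes "0 < a" "0 < b"
  shows "0 < min a b / 2" "min a b / 2 < a" "min a b / 2 < b"
  using assms by (cases "a \<le> b"; simp add: min_def)+

lemma sturm_upper_pos:
  assumes hs: "hill_solution q \<xi> \<xi>'" and w: "w > 0" and qb: "\<forall>t. q t \<le> w^2"
    and K: "\<forall>t. \<bar>q t\<bar> \<le> K"
    and p0: "\<xi> p = 0" and dp: "\<xi>' p > 0" and ts: "p < ts" "ts < p + pi / w"
  shows "\<xi> ts > 0"
proof (rule ccontr)
  assume "\<not> \<xi> ts > 0"
  then have tsn: "\<xi> ts \<le> 0" by simp
  obtain \<delta> where \<delta>: "\<delta> > 0" "\<And>h. h > 0 \<Longrightarrow> h < \<delta> \<Longrightarrow> \<xi> p < \<xi> (p + h)"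
    using DERIV_pos_inc_right[OF hs_der(1)[OF hs] dp] by blast
  define \<epsilon> where "\<epsilon> = min \<delta> (ts - p) / 2"
  have m: "0 < min \<delta> (ts - p) / 2" "min \<delta> (ts - p) / 2 < \<delta>" "min \<delta> (ts - p) / 2 < ts - p"
    using half_min[of \<delta> "ts - p"] \<delta>(1) ts by auto
  have \<epsilon>: "\<epsilon> > 0" "\<epsilon> < \<delta>" "p + \<epsilon> < ts" using m unfolding \<epsilon>_def by auto
  have xe: "\<xi> (p + \<epsilon>) > 0" using \<delta>(2)[of \<epsilon>] \<epsilon> p0 by simp
  define S where "S = {p + \<epsilon>..ts} \<inter> {t. \<xi> t \<le> 0}"
  have clS: "closed S" unfolding S_def
    by (intro closed_Int closed_atLeastAtMost closed_Collect_le hs_cont[OF hs] continuous_on_const)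
  have tsS: "ts \<in> S" using tsn \<epsilon> by (simp add: S_def)
  have bS: "bdd_below S" unfolding S_def by (rule bdd_belowI[of _ "p + \<epsilon>"]) auto
  define d where "d = Inf S"
  have dS: "d \<in> S" unfolding d_def using closed_contains_Inf[OF _ bS clS] tsS by blast
  have dlow: "d \<le> t" if "t \<in> S" for t unfolding d_def using bS that by (rule cInf_lower[rotated])
  have d1: "p + \<epsilon> \<le> d" "d \<le> ts" "\<xi> d \<le> 0" using dS by (auto simp: S_def)
  have posi: "\<xi> t > 0" if "p < t" "t < d" for t
  proof (cases "t < p + \<epsilon>")
    case True
    then show ?thesis using \<delta>(2)[of "t - p"] \<epsilon> that p0 by simp
  next
    case False
    show ?thesis
    proof (rule ccontr)
      assume "\<not> \<xi> t > 0"
      then have "t \<in> S" using False that d1 by (simp add: S_def)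
      then show False using dlow that by fastforce
    qed
  qed
  obtain z where z: "p + \<epsilon> \<le> z" "z \<le> d" "\<xi> z = 0"
    using IVT2'[of \<xi> d 0 "p + \<epsilon>", OF _ _ _ hs_cont(1)[OF hs]] d1 xe by auto
  then have "z \<in> S" using d1 by (simp add: S_def)
  then have "z = d" using dlow z by fastforce
  with z have xd: "\<xi> d = 0" by simp
  have pd: "p < d" using d1 \<epsilon> by simp
  define W where "W t = \<xi>' t * sin (w * (t - p)) - \<xi> t * (w * cos (w * (t - p)))" for t
  have dW: "(W has_real_derivative (w^2 - q t) * \<xi> t * sin (w * (t - p))) (at t)" for t
  proof -
    have s: "((\<lambda>t. sin (w * (t - p))) has_real_derivative cos (w * (t - p)) * w) (at t)"
      by (auto intro!: derivative_eq_intros)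
    have co: "((\<lambda>t. w * cos (w * (t - p))) has_real_derivative w * (- sin (w * (t - p)) * w)) (at t)"
      by (auto intro!: derivative_eq_intros)
    have "(W has_real_derivative
      (\<xi>' t * (cos (w * (t - p)) * w) + (- q t * \<xi> t) * sin (w * (t - p)))
      - (\<xi> t * (w * (- sin (w * (t - p)) * w)) + \<xi>' t * (w * cos (w * (t - p))))) (at t)"
      unfolding W_def[abs_def] by (intro DERIV_diff DERIV_mult' hs_der[OF hs] s co)
    then show ?thesis by (simp add: algebra_simps power2_eq_square)
  qed
  have Wc: "continuous_on {p..d} W" using dW by (meson DERIV_isCont continuous_at_imp_continuous_on)
  have Wd: "W differentiable (at x)" for x using dW real_differentiable_def by blast
  obtain l z where lz: "p < z" "z < d" "(W has_real_derivative l) (at z)" "W d - W p = (d - p) * l"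
    using MVT[OF pd Wc Wd] by blast
  have "l = (w^2 - q z) * \<xi> z * sin (w * (z - p))" using DERIV_unique[OF lz(3) dW] .
  moreover have "\<xi> z > 0" using posi lz by simp
  moreover have "sin (w * (z - p)) \<ge> 0"
  proof (rule sin_ge_zero)
    show "0 \<le> w * (z - p)" using lz w by simp
    have "z - p \<le> pi / w" using lz d1 ts by simp
    then show "w * (z - p) \<le> pi" using w by (simp add: field_simps)
  qed
  moreover have "w^2 - q z \<ge> 0" using qb by simp
  ultimately have "l \<ge> 0" by simp
  then have "(d - p) * l \<ge> 0" using pd by simp
  then have "W d \<ge> W p" using lz(4) by linarith
  moreover have "W p = 0" using p0 by (simp add: W_def)
  moreover have sd: "sin (w * (d - p)) > 0"
  proof (rule sin_gt_zero)
    show "0 < w * (d - p)" using pd w by simp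
    have "d - p < pi / w" using d1 ts by simp
    then show "w * (d - p) < pi" using w by (simp add: field_simps)
  qed
  moreover have "W d = \<xi>' d * sin (w * (d - p))" using xd by (simp add: W_def)
  ultimately have "\<xi>' d * sin (w * (d - p)) \<ge> 0" by simp
  then have "\<xi>' d \<ge> 0" using sd by (simp add: zero_le_mult_iff)
  show False
  proof (cases "\<xi>' d > 0")
    case True
    obtain e where e: "e > 0" "\<And>h. h > 0 \<Longrightarrow> h < e \<Longrightarrow> \<xi> (d - h) < \<xi> d"
      using DERIV_pos_inc_left[OF hs_der(1)[OF hs] True] by blast
    define h where "h = min e (d - p) / 2"
    have m: "0 < min e (d - p) / 2" "min e (d - p) / 2 < e" "min e (d - p) / 2 < d - p"
      using half_min[of e "d - p"] e(1) pd by auto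
    have h: "h > 0" "h < e" "p < d - h" using m unfolding h_def by auto
    have "\<xi> (d - h) < 0" using e(2)[OF h(1,2)] xd by simp
    moreover have "\<xi> (d - h) > 0" using posi h by simp
    ultimately show False by simp
  next
    case False
    with \<open>\<xi>' d \<ge> 0\<close> have "\<xi>' d = 0" by simp
    then have "\<xi>' p = 0" using hs_uniq[OF hs K xd] by blast
    then show False using dp by simp
  qed
qed

lemma zero_gap:
  assumes hs: "hill_solution q \<xi> \<xi>'" and w: "w > 0" and qb: "\<forall>t. q t \<le> w^2"
    and K: "\<forall>t. \<bar>q t\<bar> \<le> K" and nt: "\<xi> 0 \<noteq> 0 \<or> \<xi>' 0 \<noteq> 0"
    and z: "\<xi> p = 0" "\<xi> r = 0" "p < r"
  shows "r - p \<ge> pi / w"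
proof (rule ccontr)
  assume "\<not> r - p \<ge> pi / w"
  then have rr: "r < p + pi / w" by simp
  have "\<xi>' p \<noteq> 0"
  proof
    assume "\<xi>' p = 0"
    then show False using hs_uniq[OF hs K z(1)] nt by blast
  qed
  then show False
  proof (cases "\<xi>' p > 0")
    case True
    then show False using sturm_upper_pos[OF hs w qb K z(1) True z(3) rr] z by simp
  next
    case False
    with \<open>\<xi>' p \<noteq> 0\<close> have "- \<xi>' p > 0" by simp
    then show False using sturm_upper_pos[OF hs_neg[OF hs] w qb K _ _ z(3) rr] z by simp
  qed
qed




lemma quad_def:
  fixes A B C :: real
  assumes nz: "\<And>a b. (a, b) \<noteq> (0, 0) \<Longrightarrow> A * a^2 + B * a * b + C * b^2 \<noteq> 0"
  shows "\<exists>m>0. \<forall>a b. m * (a^2 + b^2) \<le> \<bar>A * a^2 + B * a * b + C * b^2\<bar>"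
proof -
  have A: "A \<noteq> 0" using nz[of 1 0] by simp
  have C: "C \<noteq> 0" using nz[of 0 1] by simp
  define D where "D = 4 * A * C - B^2"
  have D: "D > 0"
  proof (rule ccontr)
    assume "\<not> D > 0"
    then have ge: "B^2 - 4 * A * C \<ge> 0" by (simp add: D_def)
    define s where "s = sqrt (B^2 - 4 * A * C)"
    have s2: "s^2 = B^2 - 4 * A * C" using ge by (simp add: s_def)
    define a0 where "a0 = (- B + s) / (2 * A)"
    have "A * a0^2 + B * a0 * 1 + C * 1^2 = (s^2 - B^2 + 4 * A * C) / (4 * A)"
      using A by (simp add: a0_def field_simps power2_eq_square)
    also have "\<dots> = 0" using s2 by simp
    finally show False using nz[of a0 1] by simp
  qed
  define m where "m = D / (4 * (\<bar>A\<bar> + \<bar>C\<bar>))"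
  have m: "m > 0" using D A by (simp add: m_def)
  have "m * (a^2 + b^2) \<le> \<bar>A * a^2 + B * a * b + C * b^2\<bar>" for a b
  proof -
    let ?P = "A * a^2 + B * a * b + C * b^2"
    have e1: "4 * A * ?P = (2 * A * a + B * b)^2 + D * b^2" by (simp add: D_def algebra_simps power2_eq_square)
    have e2: "4 * C * ?P = (2 * C * b + B * a)^2 + D * a^2" by (simp add: D_def algebra_simps power2_eq_square)
    have "D * b^2 \<le> \<bar>4 * A * ?P\<bar>" unfolding e1 using D by simp
    then have i1: "D * b^2 \<le> 4 * \<bar>A\<bar> * \<bar>?P\<bar>" by (simp add: abs_mult)
    have "D * a^2 \<le> \<bar>4 * C * ?P\<bar>" unfolding e2 using D by simp
    then have i2: "D * a^2 \<le> 4 * \<bar>C\<bar> * \<bar>?P\<bar>" by (simp add: abs_mult)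
    have "D * (a^2 + b^2) \<le> (4 * (\<bar>A\<bar> + \<bar>C\<bar>)) * \<bar>?P\<bar>" using i1 i2 by (simp add: algebra_simps)
    moreover have "4 * (\<bar>A\<bar> + \<bar>C\<bar>) > 0" using A by simp
    ultimately show ?thesis unfolding m_def by (simp add: field_simps)
  qed
  then show ?thesis using m by blast
qed

lemma per_n:
  assumes "\<forall>t. q (t + T) = (q t :: real)"
  shows "q (t + real n * T) = q t"
proof (induction n arbitrary: t)
  case 0 then show ?case by simp
next
  case (Suc n)
  have "q (t + real (Suc n) * T) = q ((t + real n * T) + T)" by (simp add: algebra_simps)
  also have "\<dots> = q (t + real n * T)" using assms by simp
  also have "\<dots> = q t" using Suc by simp
  finally show ?case .
qed

lemma hs_repr:
  assumes h1: "hill_solution q \<phi>1 \<phi>1'" and h2: "hill_solution q \<phi>2 \<phi>2'"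
    and i: "\<phi>1 0 = 1" "\<phi>1' 0 = 0" "\<phi>2 0 = 0" "\<phi>2' 0 = 1"
    and hs: "hill_solution q \<xi> \<xi>'" and K: "\<forall>t. \<bar>q t\<bar> \<le> K"
  shows "\<xi> t = \<xi> 0 * \<phi>1 t + \<xi>' 0 * \<phi>2 t \<and> \<xi>' t = \<xi> 0 * \<phi>1' t + \<xi>' 0 * \<phi>2' t"
proof -
  have h: "hill_solution q (\<lambda>t. 1 * \<xi> t + (-1) * (\<xi> 0 * \<phi>1 t + \<xi>' 0 * \<phi>2 t))
                           (\<lambda>t. 1 * \<xi>' t + (-1) * (\<xi> 0 * \<phi>1' t + \<xi>' 0 * \<phi>2' t))"
    by (intro hs_lin hs h1 h2)
  have "1 * \<xi> t + (-1) * (\<xi> 0 * \<phi>1 t + \<xi>' 0 * \<phi>2 t) = 0 \<and> 1 * \<xi>' t + (-1) * (\<xi> 0 * \<phi>1' t + \<xi>' 0 * \<phi>2' t) = 0"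
    by (rule hs_uniq[OF h K, of 0]) (simp_all add: i)
  then show ?thesis by simp
qed




lemma floor_split:
  fixes t T :: real
  assumes "T > 0" "t \<ge> 0"
  obtains n :: nat where "real n * T \<le> t" "t < real n * T + T"
proof -
  define n where "n = nat \<lfloor>t / T\<rfloor>"
  have f0: "\<lfloor>t / T\<rfloor> \<ge> 0" using assms by simp
  have rn: "real n = of_int \<lfloor>t / T\<rfloor>" using f0 by (simp add: n_def)
  have "of_int \<lfloor>t / T\<rfloor> \<le> t / T" "t / T < of_int \<lfloor>t / T\<rfloor> + 1" by linarith+
  then have "real n \<le> t / T" "t / T < real n + 1" using rn by simp_all
  then have "real n * T \<le> t" "t < (real n + 1) * T" using assms(1) by (simp_all add: field_simps)
  then show ?thesis using that by (simp add: algebra_simps)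
qed

lemma abs_le_sq1: "\<bar>x::real\<bar> \<le> x^2 + 1"
proof (cases "\<bar>x\<bar> \<le> 1")
  case True
  have "0 \<le> x^2" by simp
  then show ?thesis using True by linarith
next
  case False
  then have "\<bar>x\<bar> * 1 \<le> \<bar>x\<bar> * \<bar>x\<bar>" by (intro mult_left_mono) auto
  then have "\<bar>x\<bar> \<le> x^2" by (simp add: power2_eq_square abs_mult_self_eq)
  then show ?thesis by linarith
qed

context
  fixes q :: "real \<Rightarrow> real" and T wa wb :: real
  assumes T: "T > 0" and per: "\<forall>t. q (t + T) = q t" and wa: "wa > 0" and wb: "wb > 0"
    and qa: "\<forall>t. wa^2 \<le> q t" and qb: "\<forall>t. q t \<le> wb^2" and Tlo: "pi / wa < T" and Thi: "T < 2 * pi / wb"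
begin

lemma qK: "\<forall>t. \<bar>q t\<bar> \<le> wb^2"
proof
  fix t
  have "0 \<le> wa^2" by simp
  then have "q t \<ge> 0" using qa by (meson order_trans)
  then show "\<bar>q t\<bar> \<le> wb^2" using qb by simp
qed

lemma noreal:
  assumes hs: "hill_solution q \<xi> \<xi>'" and nt: "\<xi> 0 \<noteq> 0 \<or> \<xi>' 0 \<noteq> 0"
  shows "\<xi> 0 * \<xi>' T - \<xi>' 0 * \<xi> T \<noteq> 0"
proof
  assume Q: "\<xi> 0 * \<xi>' T - \<xi>' 0 * \<xi> T = 0"
  obtain l where l: "\<xi> T = l * \<xi> 0" "\<xi>' T = l * \<xi>' 0"
  proof (cases "\<xi> 0 = 0")
    case True
    then have "\<xi>' 0 \<noteq> 0" using nt by simp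
    moreover have "\<xi>' 0 * \<xi> T = 0" using Q True by simp
    ultimately have "\<xi> T = 0" by simp
    then show ?thesis using that[of "\<xi>' T / \<xi>' 0"] True \<open>\<xi>' 0 \<noteq> 0\<close> by simp
  next
    case False
    have "\<xi>' T = (\<xi> T / \<xi> 0) * \<xi>' 0" using Q False by (simp add: field_simps)
    then show ?thesis using that[of "\<xi> T / \<xi> 0"] False by simp
  qed
  have h: "hill_solution q (\<lambda>t. 1 * \<xi> (t + T) + (- l) * \<xi> t) (\<lambda>t. 1 * \<xi>' (t + T) + (- l) * \<xi>' t)"
    by (intro hs_lin hs_shift[OF hs per] hs)
  have rel: "\<xi> (t + T) = l * \<xi> t" for t
    using hs_uniq[OF h qK, of 0 t] l by simp
  obtain z where z: "z \<in> {0..0 + pi / wa}" "\<xi> z = 0" using sturm_lower[OF hs wa qa] by blast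
  have zT: "\<xi> (z + T) = 0" using rel[of z] z by simp
  define c where "c = z + (T - pi / wa) / 2"
  obtain w where w: "w \<in> {c..c + pi / wa}" "\<xi> w = 0" using sturm_lower[OF hs wa qa, of c] by blast
  have hp: "(T - pi / wa) / 2 > 0" using Tlo by simp
  have cw: "c \<le> w" using w(1) by simp
  have zw: "z < w" using cw hp c_def by linarith
  have wc: "w \<le> c + pi / wa" using w(1) by simp
  have "c + pi / wa < z + T" unfolding c_def using Tlo by (simp add: field_simps)
  then have wz: "w < z + T" using wc by linarith
  have g1: "w - z \<ge> pi / wb" by (rule zero_gap[OF hs wb qb qK nt z(2) w(2) zw])
  have g2: "(z + T) - w \<ge> pi / wb" by (rule zero_gap[OF hs wb qb qK nt w(2) zT wz])
  have "T \<ge> 2 * pi / wb" using g1 g2 by simp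
  then show False using Thi by simp
qed

lemma cbound:
  assumes "continuous_on {0..T} f"
  obtains M :: real where "M \<ge> 0" "\<And>s. s \<in> {0..T} \<Longrightarrow> \<bar>f s\<bar> \<le> M"
proof -
  obtain B where "B \<ge> 0" "\<And>x. x \<in> {0..T} \<Longrightarrow> norm (f x) \<le> B"
    using continuous_on_compact_bound[OF compact_Icc assms] by blast
  then show ?thesis using that by simp
qed

lemma bounded_sol:
  assumes h1: "hill_solution q \<phi>1 \<phi>1'" and h2: "hill_solution q \<phi>2 \<phi>2'"
    and i: "\<phi>1 0 = 1" "\<phi>1' 0 = 0" "\<phi>2 0 = 0" "\<phi>2' 0 = 1"
    and hs: "hill_solution q \<xi> \<xi>'"
  shows "\<exists>M. \<forall>t\<ge>0. \<bar>\<xi> t\<bar> \<le> M \<and> \<bar>\<xi>' t\<bar> \<le> M"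
proof -
  define A where "A = \<phi>1' T"
  define B where "B = \<phi>2' T - \<phi>1 T"
  define C where "C = - \<phi>2 T"
  have Pnz: "A * a^2 + B * a * b + C * b^2 \<noteq> 0" if ab: "(a, b) \<noteq> (0, 0)" for a b
  proof -
    have h: "hill_solution q (\<lambda>t. a * \<phi>1 t + b * \<phi>2 t) (\<lambda>t. a * \<phi>1' t + b * \<phi>2' t)"
      by (intro hs_lin h1 h2)
    have "(\<lambda>t. a * \<phi>1 t + b * \<phi>2 t) 0 \<noteq> 0 \<or> (\<lambda>t. a * \<phi>1' t + b * \<phi>2' t) 0 \<noteq> 0"
      using ab i by auto
    from noreal[OF h this]
    have "(a * \<phi>1 0 + b * \<phi>2 0) * (a * \<phi>1' T + b * \<phi>2' T) - (a * \<phi>1' 0 + b * \<phi>2' 0) * (a * \<phi>1 T + b * \<phi>2 T) \<noteq> 0"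
      by simp
    moreover have "(a * \<phi>1 0 + b * \<phi>2 0) * (a * \<phi>1' T + b * \<phi>2' T) - (a * \<phi>1' 0 + b * \<phi>2' 0) * (a * \<phi>1 T + b * \<phi>2 T)
       = A * a^2 + B * a * b + C * b^2"
      using i by (simp add: A_def B_def C_def algebra_simps power2_eq_square)
    ultimately show ?thesis by simp
  qed
  obtain m where m: "m > 0" "\<And>a b. m * (a^2 + b^2) \<le> \<bar>A * a^2 + B * a * b + C * b^2\<bar>"
    using quad_def[OF Pnz] by blast
  define Q0 where "Q0 = \<xi> 0 * \<xi>' T - \<xi>' 0 * \<xi> T"
  define R where "R = 1 + \<bar>Q0\<bar> / m"
  have shifted: "\<xi> (real n * T + s) = \<xi> (real n * T) * \<phi>1 s + \<xi>' (real n * T) * \<phi>2 s \<and>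
                 \<xi>' (real n * T + s) = \<xi> (real n * T) * \<phi>1' s + \<xi>' (real n * T) * \<phi>2' s" for n s
  proof -
    have pn: "\<forall>t. q (t + real n * T) = q t" using per_n[OF per] by blast
    have h: "hill_solution q (\<lambda>t. \<xi> (t + real n * T)) (\<lambda>t. \<xi>' (t + real n * T))"
      by (rule hs_shift[OF hs pn])
    show ?thesis using hs_repr[OF h1 h2 i h qK, of s] by (simp add: add.commute)
  qed
  have dataR: "\<bar>\<xi> (real n * T)\<bar> \<le> R \<and> \<bar>\<xi>' (real n * T)\<bar> \<le> R" for n
  proof -
    define a where "a = \<xi> (real n * T)"
    define b where "b = \<xi>' (real n * T)"
    have ps: "hill_solution q (\<lambda>t. \<xi> (t + T)) (\<lambda>t. \<xi>' (t + T))" by (rule hs_shift[OF hs per])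
    have "\<xi> (real n * T) * \<xi>' (real n * T + T) - \<xi>' (real n * T) * \<xi> (real n * T + T) = Q0"
      using hs_wronskian[OF hs ps, of "real n * T" 0] by (simp add: Q0_def)
    moreover have "\<xi> (real n * T + T) = a * \<phi>1 T + b * \<phi>2 T" "\<xi>' (real n * T + T) = a * \<phi>1' T + b * \<phi>2' T"
      using shifted[of n T] by (simp_all add: a_def b_def)
    ultimately have "a * (a * \<phi>1' T + b * \<phi>2' T) - b * (a * \<phi>1 T + b * \<phi>2 T) = Q0"
      by (simp add: a_def b_def)
    moreover have "a * (a * \<phi>1' T + b * \<phi>2' T) - b * (a * \<phi>1 T + b * \<phi>2 T) = A * a^2 + B * a * b + C * b^2"
      by (simp add: A_def B_def C_def algebra_simps power2_eq_square)
    ultimately have "m * (a^2 + b^2) \<le> \<bar>Q0\<bar>" using m(2)[of a b] by simp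
    then have ab2: "a^2 + b^2 \<le> \<bar>Q0\<bar> / m" using m(1) by (simp add: field_simps)
    have "\<bar>a\<bar> \<le> a^2 + 1" "\<bar>b\<bar> \<le> b^2 + 1" by (rule abs_le_sq1)+
    moreover have "a^2 \<ge> 0" "b^2 \<ge> 0" by simp_all
    ultimately show ?thesis using ab2 unfolding R_def a_def[symmetric] b_def[symmetric] by linarith
  qed
  have c1: "continuous_on {0..T} \<phi>1" "continuous_on {0..T} \<phi>2"
    "continuous_on {0..T} \<phi>1'" "continuous_on {0..T} \<phi>2'"
    using hs_cont[OF h1] hs_cont[OF h2] by blast+
  obtain M1 where M1: "M1 \<ge> 0" "\<And>s. s \<in> {0..T} \<Longrightarrow> \<bar>\<phi>1 s\<bar> \<le> M1" using cbound[OF c1(1)] by blast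
  obtain M2 where M2: "M2 \<ge> 0" "\<And>s. s \<in> {0..T} \<Longrightarrow> \<bar>\<phi>2 s\<bar> \<le> M2" using cbound[OF c1(2)] by blast
  obtain M3 where M3: "M3 \<ge> 0" "\<And>s. s \<in> {0..T} \<Longrightarrow> \<bar>\<phi>1' s\<bar> \<le> M3" using cbound[OF c1(3)] by blast
  obtain M4 where M4: "M4 \<ge> 0" "\<And>s. s \<in> {0..T} \<Longrightarrow> \<bar>\<phi>2' s\<bar> \<le> M4" using cbound[OF c1(4)] by blast
  define M0 where "M0 = M1 + M2 + M3 + M4"
  have "\<bar>\<xi> t\<bar> \<le> 2 * R * M0 \<and> \<bar>\<xi>' t\<bar> \<le> 2 * R * M0" if t: "t \<ge> 0" for t
  proof -
    obtain n :: nat where n: "real n * T \<le> t" "t < real n * T + T" using floor_split[OF T t] by blast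
    define s where "s = t - real n * T"
    have s: "s \<in> {0..T}" using n by (simp add: s_def)
    have ts: "t = real n * T + s" by (simp add: s_def)
    define a where "a = \<xi> (real n * T)"
    define b where "b = \<xi>' (real n * T)"
    have ab: "\<bar>a\<bar> \<le> R" "\<bar>b\<bar> \<le> R" using dataR[of n] by (simp_all add: a_def b_def)
    have e: "\<xi> t = a * \<phi>1 s + b * \<phi>2 s" "\<xi>' t = a * \<phi>1' s + b * \<phi>2' s"
      using shifted[of n s] unfolding ts a_def b_def by simp_all
    have R0: "R \<ge> 0" using m(1) by (simp add: R_def)
    have b1: "\<bar>a * \<phi>1 s\<bar> \<le> R * M0" unfolding abs_mult
      using ab(1) M1(2)[OF s] M2(1) M3(1) M4(1) R0 by (intro mult_mono) (auto simp: M0_def)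
    have b2: "\<bar>b * \<phi>2 s\<bar> \<le> R * M0" unfolding abs_mult
      using ab(2) M2(2)[OF s] M1(1) M3(1) M4(1) R0 by (intro mult_mono) (auto simp: M0_def)
    have b3: "\<bar>a * \<phi>1' s\<bar> \<le> R * M0" unfolding abs_mult
      using ab(1) M3(2)[OF s] M1(1) M2(1) M4(1) R0 by (intro mult_mono) (auto simp: M0_def)
    have b4: "\<bar>b * \<phi>2' s\<bar> \<le> R * M0" unfolding abs_mult
      using ab(2) M4(2)[OF s] M1(1) M2(1) M3(1) R0 by (intro mult_mono) (auto simp: M0_def)
    show ?thesis unfolding e using b1 b2 b3 b4 by linarith
  qed
  then show ?thesis by blast
qed

lemma hill_stable: "hill_lyapunov_stable q"
proof (cases "\<exists>\<xi> \<xi>'. hill_solution q \<xi> \<xi>' \<and> (\<xi> 0 \<noteq> 0 \<or> \<xi>' 0 \<noteq> 0)")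
  case False
  show ?thesis unfolding hill_lyapunov_stable_def
  proof (intro allI impI)
    fix \<epsilon> :: real assume e: "\<epsilon> > 0"
    have "\<forall>\<xi> \<xi>'. hill_solution q \<xi> \<xi>' \<and> \<bar>\<xi> 0\<bar> < 1 \<and> \<bar>\<xi>' 0\<bar> < 1 \<longrightarrow>
        (\<forall>t\<ge>0. \<bar>\<xi> t\<bar> < \<epsilon> \<and> \<bar>\<xi>' t\<bar> < \<epsilon>)"
    proof (intro allI impI)
      fix \<xi> \<xi>' t assume a: "hill_solution q \<xi> \<xi>' \<and> \<bar>\<xi> 0\<bar> < 1 \<and> \<bar>\<xi>' 0\<bar> < 1"
      then have "\<xi> 0 = 0" "\<xi>' 0 = 0" using False by blast+
      then have "\<xi> t = 0 \<and> \<xi>' t = 0" using hs_uniq[OF _ qK] a by blast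
      then show "\<bar>\<xi> t\<bar> < \<epsilon> \<and> \<bar>\<xi>' t\<bar> < \<epsilon>" using e by simp
    qed
    then show "\<exists>\<delta>>0. \<forall>\<xi> \<xi>'. hill_solution q \<xi> \<xi>' \<and> \<bar>\<xi> 0\<bar> < \<delta> \<and> \<bar>\<xi>' 0\<bar> < \<delta> \<longrightarrow>
        (\<forall>t\<ge>0. \<bar>\<xi> t\<bar> < \<epsilon> \<and> \<bar>\<xi>' t\<bar> < \<epsilon>)" by (intro exI[of _ 1]) simp
  qed
next
  case True
  then obtain \<xi>0 \<xi>0' where h0: "hill_solution q \<xi>0 \<xi>0'" and nt: "\<xi>0 0 \<noteq> 0 \<or> \<xi>0' 0 \<noteq> 0" by blast
  define W0 where "W0 = \<xi>0 0 * \<xi>0' T - \<xi>0' 0 * \<xi>0 T"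
  have W0: "W0 \<noteq> 0" using noreal[OF h0 nt] by (simp add: W0_def)
  have hsh: "hill_solution q (\<lambda>t. \<xi>0 (t + T)) (\<lambda>t. \<xi>0' (t + T))" by (rule hs_shift[OF h0 per])
  define \<phi>1 where "\<phi>1 = (\<lambda>t. (\<xi>0' T / W0) * \<xi>0 t + (- \<xi>0' 0 / W0) * \<xi>0 (t + T))"
  define \<phi>1' where "\<phi>1' = (\<lambda>t. (\<xi>0' T / W0) * \<xi>0' t + (- \<xi>0' 0 / W0) * \<xi>0' (t + T))"
  define \<phi>2 where "\<phi>2 = (\<lambda>t. (- \<xi>0 T / W0) * \<xi>0 t + (\<xi>0 0 / W0) * \<xi>0 (t + T))"
  define \<phi>2' where "\<phi>2' = (\<lambda>t. (- \<xi>0 T / W0) * \<xi>0' t + (\<xi>0 0 / W0) * \<xi>0' (t + T))"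
  have h1: "hill_solution q \<phi>1 \<phi>1'" unfolding \<phi>1_def \<phi>1'_def by (rule hs_lin[OF h0 hsh])
  have h2: "hill_solution q \<phi>2 \<phi>2'" unfolding \<phi>2_def \<phi>2'_def by (rule hs_lin[OF h0 hsh])
  have i: "\<phi>1 0 = 1" "\<phi>1' 0 = 0" "\<phi>2 0 = 0" "\<phi>2' 0 = 1"
  proof -
    have e1: "\<phi>1 0 = (\<xi>0 0 * \<xi>0' T - \<xi>0' 0 * \<xi>0 T) / W0" "\<phi>1' 0 = (\<xi>0' T * \<xi>0' 0 - \<xi>0' 0 * \<xi>0' T) / W0"
       "\<phi>2 0 = (\<xi>0 0 * \<xi>0 T - \<xi>0 T * \<xi>0 0) / W0" "\<phi>2' 0 = (\<xi>0 0 * \<xi>0' T - \<xi>0' 0 * \<xi>0 T) / W0"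
      unfolding \<phi>1_def \<phi>1'_def \<phi>2_def \<phi>2'_def by (simp_all add: diff_divide_distrib add_divide_distrib algebra_simps)
    have "\<phi>1 0 = W0 / W0" "\<phi>1' 0 = 0 / W0" "\<phi>2 0 = 0 / W0" "\<phi>2' 0 = W0 / W0"
      unfolding e1 W0_def by (simp_all add: algebra_simps)
    then show "\<phi>1 0 = 1" "\<phi>1' 0 = 0" "\<phi>2 0 = 0" "\<phi>2' 0 = 1" using W0 by simp_all
  qed
  obtain M1 where M1: "\<forall>t\<ge>0. \<bar>\<phi>1 t\<bar> \<le> M1 \<and> \<bar>\<phi>1' t\<bar> \<le> M1" using bounded_sol[OF h1 h2 i h1] by blast
  obtain M2 where M2: "\<forall>t\<ge>0. \<bar>\<phi>2 t\<bar> \<le> M2 \<and> \<bar>\<phi>2' t\<bar> \<le> M2" using bounded_sol[OF h1 h2 i h2] by blast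
  define M where "M = \<bar>M1\<bar> + \<bar>M2\<bar>"
  have M0: "M \<ge> 0" by (simp add: M_def)
  show ?thesis unfolding hill_lyapunov_stable_def
  proof (intro allI impI)
    fix \<epsilon> :: real assume e: "\<epsilon> > 0"
    define \<delta> where "\<delta> = \<epsilon> / (2 * M + 2)"
    have d0: "\<delta> > 0" using e M0 by (simp add: \<delta>_def)
    have dM: "\<delta> * M < \<epsilon>"
    proof -
      have "\<delta> * M = \<epsilon> * (M / (2 * M + 2))" by (simp add: \<delta>_def)
      also have "\<dots> < \<epsilon> * 1" using e M0 by (intro mult_strict_left_mono) (auto simp: field_simps)
      finally show ?thesis by simp
    qed
    have "\<forall>\<xi> \<xi>'. hill_solution q \<xi> \<xi>' \<and> \<bar>\<xi> 0\<bar> < \<delta> \<and> \<bar>\<xi>' 0\<bar> < \<delta> \<longrightarrow>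
        (\<forall>t\<ge>0. \<bar>\<xi> t\<bar> < \<epsilon> \<and> \<bar>\<xi>' t\<bar> < \<epsilon>)"
    proof (intro allI impI)
      fix \<xi> \<xi>' and t :: real assume a: "hill_solution q \<xi> \<xi>' \<and> \<bar>\<xi> 0\<bar> < \<delta> \<and> \<bar>\<xi>' 0\<bar> < \<delta>" and t: "t \<ge> 0"
      have r: "\<xi> t = \<xi> 0 * \<phi>1 t + \<xi>' 0 * \<phi>2 t \<and> \<xi>' t = \<xi> 0 * \<phi>1' t + \<xi>' 0 * \<phi>2' t"
        using hs_repr[OF h1 h2 i _ qK] a by blast
      have m1: "\<bar>\<phi>1 t\<bar> \<le> \<bar>M1\<bar>" "\<bar>\<phi>1' t\<bar> \<le> \<bar>M1\<bar>" "\<bar>\<phi>2 t\<bar> \<le> \<bar>M2\<bar>" "\<bar>\<phi>2' t\<bar> \<le> \<bar>M2\<bar>"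
        using M1 M2 t by fastforce+
      have p1: "\<bar>\<xi> 0 * \<phi>1 t\<bar> \<le> \<delta> * \<bar>M1\<bar>" unfolding abs_mult using a m1 d0 by (intro mult_mono) auto
      have p2: "\<bar>\<xi>' 0 * \<phi>2 t\<bar> \<le> \<delta> * \<bar>M2\<bar>" unfolding abs_mult using a m1 d0 by (intro mult_mono) auto
      have p3: "\<bar>\<xi> 0 * \<phi>1' t\<bar> \<le> \<delta> * \<bar>M1\<bar>" unfolding abs_mult using a m1 d0 by (intro mult_mono) auto
      have p4: "\<bar>\<xi>' 0 * \<phi>2' t\<bar> \<le> \<delta> * \<bar>M2\<bar>" unfolding abs_mult using a m1 d0 by (intro mult_mono) auto
      have "\<delta> * \<bar>M1\<bar> + \<delta> * \<bar>M2\<bar> = \<delta> * M" by (simp add: M_def algebra_simps)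
      then show "\<bar>\<xi> t\<bar> < \<epsilon> \<and> \<bar>\<xi>' t\<bar> < \<epsilon>" using r p1 p2 p3 p4 dM by (smt (verit) abs_triangle_ineq)
    qed
    then show "\<exists>\<delta>>0. \<forall>\<xi> \<xi>'. hill_solution q \<xi> \<xi>' \<and> \<bar>\<xi> 0\<bar> < \<delta> \<and> \<bar>\<xi>' 0\<bar> < \<delta> \<longrightarrow>
        (\<forall>t\<ge>0. \<bar>\<xi> t\<bar> < \<epsilon> \<and> \<bar>\<xi>' t\<bar> < \<epsilon>)" using d0 by blast
  qed
qed

end




definition ysol :: "(real \<Rightarrow> real) \<Rightarrow> (real \<Rightarrow> real) \<Rightarrow> bool" where
  "ysol u u' \<longleftrightarrow> (\<forall>t. (u has_real_derivative u' t) (at t) \<and> (u' has_real_derivative (- (3 * u t + 3/2 * (u t)^3))) (at t))"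

definition Vp :: "real \<Rightarrow> real" where "Vp x = 3/2 * x^2 + 3/8 * x^4"

lemma ys_der:
  assumes "ysol u u'"
  shows "(u has_real_derivative u' t) (at t)" "(u' has_real_derivative (- (3 * u t + 3/2 * (u t)^3))) (at t)"
  using assms unfolding ysol_def by blast+

lemma ys_cont:
  assumes "ysol u u'"
  shows "continuous_on S u" "continuous_on S u'"
  using ys_der[OF assms] by (meson DERIV_isCont continuous_at_imp_continuous_on)+

lemma ys_energy:
  assumes "ysol u u'"
  shows "(u' t)^2 / 2 + Vp (u t) = (u' s)^2 / 2 + Vp (u s)"
proof -
  have "\<forall>x. ((\<lambda>t. (u' t)^2 / 2 + Vp (u t)) has_real_derivative 0) (at x)"
  proof
    fix x
    have d1: "(u has_real_derivative u' x) (at x)" "(u' has_real_derivative (- (3 * u x + 3/2 * (u x)^3))) (at x)"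
      using ys_der[OF assms] by blast+
    have fe: "(\<lambda>t. (u' t)^2 / 2 + Vp (u t)) = (\<lambda>t. (u' t * u' t) / 2 + (3/2 * (u t * u t) + 3/8 * ((u t * u t) * (u t * u t))))"
      by (simp add: fun_eq_iff Vp_def power2_eq_square power4_eq_xxxx)
    have der: "((\<lambda>t. (u' t * u' t) / 2 + (3/2 * (u t * u t) + 3/8 * ((u t * u t) * (u t * u t)))) has_real_derivative
        (u' x * (- (3 * u x + 3/2 * (u x)^3)) + (- (3 * u x + 3/2 * (u x)^3)) * u' x) / 2
        + (3/2 * (u x * u' x + u' x * u x) + 3/8 * ((u x * u x) * (u x * u' x + u' x * u x) + (u x * u' x + u' x * u x) * (u x * u x)))) (at x)"
      by (intro DERIV_add DERIV_cmult DERIV_mult' d1 DERIV_cdivide)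
    have ze: "(u' x * (- (3 * u x + 3/2 * (u x)^3)) + (- (3 * u x + 3/2 * (u x)^3)) * u' x) / 2
        + (3/2 * (u x * u' x + u' x * u x) + 3/8 * ((u x * u x) * (u x * u' x + u' x * u x) + (u x * u' x + u' x * u x) * (u x * u x))) = 0"
      by (simp add: power3_eq_cube field_simps)
    show "((\<lambda>t. (u' t)^2 / 2 + Vp (u t)) has_real_derivative 0) (at x)"
      unfolding fe using der unfolding ze .
  qed
  then show ?thesis by (rule DERIV_isconst_all)
qed

lemma ys_neg:
  assumes "ysol u u'"
  shows "ysol (\<lambda>t. - u t) (\<lambda>t. - u' t)"
  unfolding ysol_def
proof
  fix t
  have d: "(u has_real_derivative u' t) (at t)" "(u' has_real_derivative (- (3 * u t + 3/2 * (u t)^3))) (at t)"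
    using ys_der[OF assms] by blast+
  have "((\<lambda>t. - u' t) has_real_derivative - (- (3 * u t + 3/2 * (u t)^3))) (at t)"
    by (intro DERIV_minus d)
  then show "((\<lambda>t. - u t) has_real_derivative - u' t) (at t) \<and>
    ((\<lambda>t. - u' t) has_real_derivative - (3 * - u t + 3 / 2 * (- u t) ^ 3)) (at t)"
    using DERIV_minus[OF d(1)] by simp
qed

lemma ys_refl:
  assumes "ysol u u'"
  shows "ysol (\<lambda>t. u (2 * c - t)) (\<lambda>t. - u' (2 * c - t))"
  unfolding ysol_def
proof
  fix t
  have d: "(u has_real_derivative u' (2*c - t)) (at (2*c - t))"
     "(u' has_real_derivative (- (3 * u (2*c - t) + 3/2 * (u (2*c - t))^3))) (at (2*c - t))"
    using ys_der[OF assms] by blast+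
  have g: "((\<lambda>t. 2 * c - t) has_real_derivative -1) (at t)" by (auto intro!: derivative_eq_intros)
  have "((\<lambda>t. u (2 * c - t)) has_real_derivative u' (2*c - t) * -1) (at t)"
    by (rule DERIV_chain2[OF d(1) g])
  then have "((\<lambda>t. u (2 * c - t)) has_real_derivative - u' (2*c - t)) (at t)"
    by (simp only: mult_minus1_right)
  moreover have "((\<lambda>t. u' (2 * c - t)) has_real_derivative (- (3 * u (2*c - t) + 3/2 * (u (2*c - t))^3)) * -1) (at t)"
    by (rule DERIV_chain2[OF d(2) g])
  then have "((\<lambda>t. - u' (2 * c - t)) has_real_derivative - ((- (3 * u (2*c - t) + 3/2 * (u (2*c - t))^3)) * -1)) (at t)"
    by (rule DERIV_minus)
  then have "((\<lambda>t. - u' (2 * c - t)) has_real_derivative - (3 * u (2*c - t) + 3/2 * (u (2*c - t))^3)) (at t)"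
    by (simp only: mult_minus1_right minus_minus)
  ultimately show "((\<lambda>t. u (2 * c - t)) has_real_derivative - u' (2 * c - t)) (at t) \<and>
    ((\<lambda>t. - u' (2 * c - t)) has_real_derivative - (3 * u (2 * c - t) + 3 / 2 * u (2 * c - t) ^ 3)) (at t)"
    by (rule conjI)
qed

lemma sq3: "0 \<le> x^2 + x * y + (y::real)^2"
proof -
  have "x^2 + x * y + y^2 = (x + y/2)^2 + 3/4 * y^2" by (simp add: power2_eq_square algebra_simps)
  moreover have "0 \<le> (x + y/2)^2 + 3/4 * y^2" by simp
  ultimately show ?thesis by simp
qed

lemma ys_uniq:
  assumes hu: "ysol u u'" and hw: "ysol w w'" and B: "\<forall>t. \<bar>u t\<bar> \<le> B" "\<forall>t. \<bar>w t\<bar> \<le> B"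
    and s: "u s = w s" "u' s = w' s"
  shows "u t = w t"
proof -
  define g where "g t = 3 + 3/2 * ((u t)^2 + u t * w t + (w t)^2)" for t
  have h: "hill_solution g (\<lambda>t. u t - w t) (\<lambda>t. u' t - w' t)"
    unfolding hill_solution_def
  proof
    fix t
    have du: "(u has_real_derivative u' t) (at t)" "(u' has_real_derivative (- (3 * u t + 3/2 * (u t)^3))) (at t)"
      using ys_der[OF hu] by blast+
    have dw: "(w has_real_derivative w' t) (at t)" "(w' has_real_derivative (- (3 * w t + 3/2 * (w t)^3))) (at t)"
      using ys_der[OF hw] by blast+
    have "((\<lambda>t. u' t - w' t) has_real_derivative (- (3 * u t + 3/2 * (u t)^3)) - (- (3 * w t + 3/2 * (w t)^3))) (at t)"
      by (intro DERIV_diff du dw)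
    moreover have "(- (3 * u t + 3/2 * (u t)^3)) - (- (3 * w t + 3/2 * (w t)^3)) = - g t * (u t - w t)"
      unfolding g_def power2_eq_square power3_eq_cube by (simp add: field_simps)
    ultimately show "((\<lambda>t. u t - w t) has_real_derivative u' t - w' t) (at t) \<and>
         ((\<lambda>t. u' t - w' t) has_real_derivative - g t * (u t - w t)) (at t)"
      using DERIV_diff[OF du(1) dw(1)] by simp
  qed
  have K: "\<forall>t. \<bar>g t\<bar> \<le> 3 + 9/2 * B^2"
  proof
    fix t
    have a: "\<bar>u t\<bar> \<le> B" "\<bar>w t\<bar> \<le> B" using B by blast+
    have "(u t)^2 \<le> B^2" using power_mono[OF a(1) abs_ge_zero, of 2] by simp
    moreover have "(w t)^2 \<le> B^2" using power_mono[OF a(2) abs_ge_zero, of 2] by simp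
    moreover have "\<bar>u t * w t\<bar> \<le> B^2" unfolding abs_mult power2_eq_square using a by (intro mult_mono) auto
    moreover have "0 \<le> (u t)^2 + u t * w t + (w t)^2" by (rule sq3)
    ultimately show "\<bar>g t\<bar> \<le> 3 + 9/2 * B^2" unfolding g_def by (simp add: abs_le_iff)
  qed
  have "u t - w t = 0 \<and> u' t - w' t = 0" by (rule hs_uniq[OF h K, of s]) (use s in simp_all)
  then show ?thesis by simp
qed




lemma F_pos: "x > 0 \<Longrightarrow> 3 * x + 3/2 * x^3 > (0::real)"
  by (simp add: add_pos_pos)

lemma F_nonpos: "x \<le> 0 \<Longrightarrow> 3 * x + 3/2 * x^3 \<le> (0::real)"
proof -
  assume "x \<le> 0"
  moreover have "x^3 \<le> 0" using \<open>x \<le> 0\<close> by (simp add: power_le_zero_eq)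
  ultimately show ?thesis by linarith
qed

lemma F_mono: "0 \<le> c \<Longrightarrow> c \<le> x \<Longrightarrow> 3 * c + 3/2 * c^3 \<le> 3 * x + 3/2 * (x::real)^3"
proof -
  assume a: "0 \<le> c" "c \<le> x"
  have "c^3 \<le> x^3" using power_mono[OF a(2) a(1)] .
  then show ?thesis using a by linarith
qed

lemma nz_sign:
  fixes f :: "real \<Rightarrow> real"
  assumes c: "continuous_on UNIV f" and nz: "\<forall>t. f t \<noteq> 0" and p: "f 0 > 0"
  shows "f t > 0"
proof (rule ccontr)
  assume "\<not> f t > 0"
  then have ft: "f t \<le> 0" by simp
  show False
  proof (cases "0 \<le> t")
    case True
    obtain z where "f z = 0" using IVT2'[of f t 0 0, OF ft _ True continuous_on_subset[OF c]] p by auto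
    then show False using nz by blast
  next
    case False
    then have "t \<le> 0" by simp
    obtain z where "f z = 0" using IVT'[of f t 0 0, OF ft _ \<open>t \<le> 0\<close> continuous_on_subset[OF c]] p by auto
    then show False using nz by blast
  qed
qed

lemma ys_bounded:
  assumes hs: "ysol u u'"
  shows "\<exists>B. \<forall>t. \<bar>u t\<bar> \<le> B"
proof -
  define E where "E = (u' 0)^2 / 2 + Vp (u 0)"
  have "\<bar>u t\<bar> \<le> 2 / 3 * E + 1" for t
  proof -
    have e: "(u' t)^2 / 2 + Vp (u t) = E" using ys_energy[OF hs, of t 0] by (simp add: E_def)
    have "0 \<le> (u' t)^2 / 2" "0 \<le> 3/8 * (u t)^4" by simp_all
    then have "3/2 * (u t)^2 \<le> E" using e unfolding Vp_def by linarith
    then have "(u t)^2 \<le> 2/3 * E" by simp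
    then show ?thesis using abs_le_sq1[of "u t"] by linarith
  qed
  then show ?thesis by blast
qed

lemma ys_no_pos_der:
  assumes hs: "ysol u u'" and pos: "\<forall>t. u' t > 0"
  shows False
proof -
  obtain B where B: "\<forall>t. \<bar>u t\<bar> \<le> B" using ys_bounded[OF hs] by blast
  have "\<exists>ts. u ts > 0"
  proof (rule ccontr)
    assume "\<not> (\<exists>ts. u ts > 0)"
    then have np: "u t \<le> 0" for t by (simp add: not_less)
    define v where "v = u' 0"
    have v: "v > 0" using pos by (simp add: v_def)
    define t where "t = (2 * B + 1) / v"
    have t0: "0 \<le> t"
    proof -
      have "0 \<le> B" using B[rule_format, of 0] by linarith
      then show ?thesis using v by (simp add: t_def)
    qed
    have "(\<lambda>s. u s - v * s) 0 \<le> (\<lambda>s. u s - v * s) t"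
    proof (rule DERIV_nonneg_imp_nondecreasing[OF t0])
      fix x assume x: "0 \<le> x" "x \<le> t"
      have "u' 0 \<le> u' x"
      proof (rule DERIV_nonneg_imp_nondecreasing[OF x(1)])
        fix y assume "0 \<le> y" "y \<le> x"
        have "- (3 * u y + 3/2 * (u y)^3) \<ge> 0" using F_nonpos[OF np[of y]] by simp
        then show "\<exists>d. (u' has_real_derivative d) (at y) \<and> 0 \<le> d" using ys_der(2)[OF hs, of y] by blast
      qed
      moreover have "((\<lambda>s. u s - v * s) has_real_derivative u' x - v * 1) (at x)"
        by (intro DERIV_diff DERIV_cmult ys_der(1)[OF hs] DERIV_ident)
      ultimately show "\<exists>d. ((\<lambda>s. u s - v * s) has_real_derivative d) (at x) \<and> 0 \<le> d"
        by (auto simp: v_def)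
    qed
    then have "u t \<ge> u 0 + v * t" by simp
    moreover have "v * t = 2 * B + 1" using v by (simp add: t_def)
    moreover have "u 0 \<ge> - B" using B[rule_format, of 0] by linarith
    moreover have "u t \<le> B" using B[rule_format, of t] by linarith
    ultimately show False by linarith
  qed
  then obtain ts where ts: "u ts > 0" by blast
  define c where "c = u ts"
  define Fc where "Fc = 3 * c + 3/2 * c^3"
  have Fc: "Fc > 0" unfolding Fc_def using F_pos ts by (simp add: c_def)
  define t where "t = ts + u' ts / Fc"
  have tts: "ts \<le> t" using pos[rule_format, of ts] Fc by (simp add: t_def)
  have ge: "u s \<ge> c" if "ts \<le> s" for s
  proof -
    have "u ts \<le> u s"
      by (rule DERIV_nonneg_imp_nondecreasing[OF that]) (use ys_der(1)[OF hs] pos less_imp_le in blast)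
    then show ?thesis by (simp add: c_def)
  qed
  have "(\<lambda>s. u' s + Fc * s) t \<le> (\<lambda>s. u' s + Fc * s) ts"
  proof (rule DERIV_nonpos_imp_nonincreasing[OF tts])
    fix x assume x: "ts \<le> x" "x \<le> t"
    have "Fc \<le> 3 * u x + 3/2 * (u x)^3" unfolding Fc_def using F_mono ge[OF x(1)] ts by (simp add: c_def)
    moreover have "((\<lambda>s. u' s + Fc * s) has_real_derivative - (3 * u x + 3/2 * (u x)^3) + Fc * 1) (at x)"
      by (intro DERIV_add DERIV_cmult ys_der(2)[OF hs] DERIV_ident)
    ultimately show "\<exists>d. ((\<lambda>s. u' s + Fc * s) has_real_derivative d) (at x) \<and> d \<le> 0"
      by (intro exI conjI) auto
  qed
  then have "u' t \<le> u' ts - Fc * (t - ts)" by (simp add: algebra_simps)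
  moreover have "Fc * (t - ts) = u' ts" using Fc by (simp add: t_def)
  ultimately have "u' t \<le> 0" by simp
  then show False using pos by (simp add: not_less[symmetric])
qed

lemma ys_crit:
  assumes hs: "ysol u u'"
  shows "\<exists>t. u' t = 0"
proof (rule ccontr)
  assume "\<not> (\<exists>t. u' t = 0)"
  then have nz: "\<forall>t. u' t \<noteq> 0" by blast
  show False
  proof (cases "u' 0 > 0")
    case True
    have "\<forall>t. u' t > 0" using nz_sign[OF ys_cont(2)[OF hs] nz True] by blast
    then show False using ys_no_pos_der[OF hs] by blast
  next
    case False
    then have "(\<lambda>t. - u' t) 0 > 0" using nz[rule_format, of 0] by simp
    moreover have "\<forall>t. (\<lambda>t. - u' t) t \<noteq> 0" using nz by simp
    moreover have "continuous_on UNIV (\<lambda>t. - u' t)" using ys_cont(2)[OF ys_neg[OF hs]] .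
    ultimately have "\<forall>t. (\<lambda>t. - u' t) t > 0" using nz_sign by blast
    then show False using ys_no_pos_der[OF ys_neg[OF hs]] by blast
  qed
qed




lemma ys_first_zero:
  assumes hs: "ysol u u'" and A: "A > 0" and t0: "u t0 = A" "u' t0 = 0"
  shows "\<exists>t1>t0. u t1 = 0 \<and> (\<forall>t. t0 \<le> t \<and> t < t1 \<longrightarrow> u t > 0) \<and>
           (\<forall>t. t0 < t \<and> t \<le> t1 \<longrightarrow> u' t < 0 \<and> u t < A)"
proof -
  have "\<exists>t2>t0. u t2 \<le> 0"
  proof (rule ccontr)
    assume "\<not> (\<exists>t2>t0. u t2 \<le> 0)"
    then have pos: "u t > 0" if "t0 \<le> t" for t using that t0 A by (cases "t = t0") (auto simp: not_le)
    have c1: "continuous_on {t0..t0+1} u'" using ys_cont(2)[OF hs] .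
    have d1: "u' differentiable (at x)" for x using ys_der(2)[OF hs] real_differentiable_def by blast
    obtain l z where lz: "t0 < z" "z < t0 + 1" "(u' has_real_derivative l) (at z)" "u' (t0 + 1) - u' t0 = (t0 + 1 - t0) * l"
      using MVT[of t0 "t0 + 1" u', OF _ c1 d1] by auto
    have "l = - (3 * u z + 3/2 * (u z)^3)" using DERIV_unique[OF lz(3) ys_der(2)[OF hs]] .
    then have "l < 0" using F_pos[OF pos[of z]] lz by simp
    then have v: "u' (t0 + 1) < 0" using lz(4) t0 by simp
    define v where "v = - u' (t0 + 1)"
    have v0: "v > 0" using v by (simp add: v_def)
    define t where "t = t0 + 1 + (\<bar>u (t0 + 1)\<bar> + 1) / v"
    have tt: "t0 + 1 \<le> t" using v0 by (simp add: t_def)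
    have "(\<lambda>s. u s + v * s) t \<le> (\<lambda>s. u s + v * s) (t0 + 1)"
    proof (rule DERIV_nonpos_imp_nonincreasing[OF tt])
      fix x assume x: "t0 + 1 \<le> x" "x \<le> t"
      have "u' x \<le> u' (t0 + 1)"
      proof (rule DERIV_nonpos_imp_nonincreasing[OF x(1)])
        fix y assume y: "t0 + 1 \<le> y" "y \<le> x"
        have "- (3 * u y + 3/2 * (u y)^3) \<le> 0" using F_pos[OF pos[of y]] y by simp
        then show "\<exists>d. (u' has_real_derivative d) (at y) \<and> d \<le> 0" using ys_der(2)[OF hs, of y] by blast
      qed
      moreover have "((\<lambda>s. u s + v * s) has_real_derivative u' x + v * 1) (at x)"
        by (intro DERIV_add DERIV_cmult ys_der(1)[OF hs] DERIV_ident)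
      ultimately show "\<exists>d. ((\<lambda>s. u s + v * s) has_real_derivative d) (at x) \<and> d \<le> 0"
        by (intro exI conjI) (auto simp: v_def)
    qed
    then have "u t \<le> u (t0 + 1) - v * (t - (t0 + 1))" by (simp add: algebra_simps)
    moreover have "v * (t - (t0 + 1)) = \<bar>u (t0 + 1)\<bar> + 1" using v0 by (simp add: t_def)
    ultimately have "u t < 0" by linarith
    then show False using pos[of t] tt by simp
  qed
  then obtain t2 where t2: "t2 > t0" "u t2 \<le> 0" by blast
  define Z where "Z = {t0..t2} \<inter> {t. u t = 0}"
  have clZ: "closed Z" unfolding Z_def
    by (intro closed_Int closed_atLeastAtMost closed_Collect_eq ys_cont[OF hs] continuous_on_const)
  obtain z0 where z0: "t0 \<le> z0" "z0 \<le> t2" "u z0 = 0"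
    using IVT2'[of u t2 0 t0, OF t2(2) _ _ ys_cont(1)[OF hs]] t0 A t2(1) by auto
  have Zne: "z0 \<in> Z" using z0 by (simp add: Z_def)
  have bZ: "bdd_below Z" unfolding Z_def by (rule bdd_belowI[of _ t0]) auto
  define t1 where "t1 = Inf Z"
  have t1Z: "t1 \<in> Z" unfolding t1_def using closed_contains_Inf[OF _ bZ clZ] Zne by blast
  have t1low: "t1 \<le> t" if "t \<in> Z" for t unfolding t1_def using bZ that by (rule cInf_lower[rotated])
  have t1a: "t0 \<le> t1" "t1 \<le> t2" "u t1 = 0" using t1Z by (auto simp: Z_def)
  have t1gt: "t0 < t1" using t1a t0 A by (cases "t1 = t0") auto
  have posi: "u t > 0" if tt: "t0 \<le> t" "t < t1" for t
  proof (rule ccontr)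
    assume "\<not> u t > 0"
    then have "u t \<le> 0" by simp
    then obtain z where z: "t0 \<le> z" "z \<le> t" "u z = 0"
      using IVT2'[of u t 0 t0, OF _ _ tt(1) ys_cont(1)[OF hs]] t0 A by auto
    then have "z \<in> Z" using tt t1a by (simp add: Z_def)
    then show False using t1low z tt by fastforce
  qed
  have dneg: "u' t < 0" if tt: "t0 < t" "t \<le> t1" for t
  proof -
    have c1: "continuous_on {t0..t} u'" using ys_cont(2)[OF hs] .
    have d1: "u' differentiable (at x)" for x using ys_der(2)[OF hs] real_differentiable_def by blast
    obtain l z where lz: "t0 < z" "z < t" "(u' has_real_derivative l) (at z)" "u' t - u' t0 = (t - t0) * l"
      using MVT[OF tt(1) c1 d1] by auto
    have "l = - (3 * u z + 3/2 * (u z)^3)" using DERIV_unique[OF lz(3) ys_der(2)[OF hs]] .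
    then have "l < 0" using F_pos[OF posi[of z]] lz tt by simp
    then show ?thesis using lz(4) t0 tt by (simp add: mult_pos_neg)
  qed
  have ult: "u t < A" if tt: "t0 < t" "t \<le> t1" for t
  proof -
    have c1: "continuous_on {t0..t} u" using ys_cont(1)[OF hs] .
    have d1: "u differentiable (at x)" for x using ys_der(1)[OF hs] real_differentiable_def by blast
    obtain l z where lz: "t0 < z" "z < t" "(u has_real_derivative l) (at z)" "u t - u t0 = (t - t0) * l"
      using MVT[OF tt(1) c1 d1] by auto
    have "l = u' z" using DERIV_unique[OF lz(3) ys_der(1)[OF hs]] .
    then have "l < 0" using dneg[of z] lz tt by simp
    then have "(t - t0) * l < 0" using tt by (simp add: mult_pos_neg)
    then show ?thesis using lz(4) t0 by linarith
  qed
  show ?thesis using t1gt t1a posi dneg ult by blast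
qed




lemma ys_time:
  assumes hs: "ysol u u'" and A: "A > 0" and t0: "u t0 = A" "u' t0 = 0" and t1: "t0 < t1" "u t1 = 0"
    and posi: "\<forall>t. t0 \<le> t \<and> t < t1 \<longrightarrow> u t > 0"
    and neg: "\<forall>t. t0 < t \<and> t \<le> t1 \<longrightarrow> u' t < 0 \<and> u t < A"
  shows "\<exists>k p. k > 0 \<and> (t1 - t0) * k = pi / 2 \<and> 0 < p \<and> p < A \<and> k^2 = 3 + 3/4 * (A^2 + p^2)"
proof -
  define \<phi> where "\<phi> t = arccos (u t / A)" for t
  have rng: "0 \<le> u t \<and> u t \<le> A" if "t \<in> {t0..t1}" for t
  proof (cases "t = t1")
    case True then show ?thesis using t1 A by simp
  next
    case False
    then have "t < t1" using that by simp
    then show ?thesis using that posi neg t0 by (cases "t = t0") (auto simp: less_imp_le)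
  qed
  have cphi: "continuous_on {t0..t1} \<phi>" unfolding \<phi>_def
  proof (intro continuous_on_arccos ballI conjI)
    show "continuous_on {t0..t1} (\<lambda>t. u t / A)" by (intro continuous_intros ys_cont(1)[OF hs]) (use A in simp)
  next
    fix t assume "t \<in> {t0..t1}"
    then have "0 \<le> u t" "u t \<le> A" using rng by blast+
    then show "- 1 \<le> u t / A" "u t / A \<le> 1" using A by (simp_all add: field_simps)
  qed
  have dphi: "(\<phi> has_real_derivative inverse (- sqrt (1 - (u x / A)^2)) * (u' x / A)) (at x)"
    if "t0 < x" "x < t1" for x
  proof -
    have "0 < u x" "u x < A" using posi neg that by auto
    then have "- 1 < u x / A" "u x / A < 1" using A by (simp_all add: field_simps)
    from DERIV_arccos[OF this] have "(arccos has_real_derivative inverse (- sqrt (1 - (u x / A)^2))) (at (u x / A))" .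
    moreover have "((\<lambda>t. u t / A) has_real_derivative u' x / A) (at x)"
      by (intro DERIV_cdivide ys_der(1)[OF hs])
    ultimately show ?thesis unfolding \<phi>_def by (rule DERIV_chain2)
  qed
  have difphi: "\<phi> differentiable (at x)" if "t0 < x" "x < t1" for x
    using dphi[OF that] real_differentiable_def by blast
  obtain l z where lz: "t0 < z" "z < t1" "(\<phi> has_real_derivative l) (at z)" "\<phi> t1 - \<phi> t0 = (t1 - t0) * l"
    using MVT[OF t1(1) cphi difphi] by blast
  have leq: "l = inverse (- sqrt (1 - (u z / A)^2)) * (u' z / A)" using DERIV_unique[OF lz(3) dphi[OF lz(1,2)]] .
  have "\<phi> t1 = pi / 2" "\<phi> t0 = 0" using t1 t0 A by (simp_all add: \<phi>_def)
  then have main: "(t1 - t0) * l = pi / 2" using lz(4) by simp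
  define p where "p = u z"
  define v where "v = u' z"
  have p: "0 < p" "p < A" using posi neg lz(1,2) by (auto simp: p_def)
  have v: "v < 0" using neg lz(1,2) by (auto simp: v_def)
  define s where "s = 1 - (p / A)^2"
  have "p / A < 1" "0 < p / A" using p A by (simp_all add: field_simps)
  then have "(p / A)^2 < 1" by (simp add: power_less_one_iff)
  then have s: "s > 0" by (simp add: s_def)
  have leq2: "l = - (v / A) / sqrt s" using leq by (simp add: p_def v_def s_def divide_inverse)
  have l0: "l > 0"
  proof -
    have "- (v / A) > 0" using v A by (simp add: divide_neg_pos)
    moreover have "sqrt s > 0" using s by simp
    ultimately show ?thesis unfolding leq2 by (rule divide_pos_pos)
  qed
  have "l^2 = (v / A)^2 / s" unfolding leq2 using s by (simp add: power_divide power_mult_distrib)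
  also have "\<dots> = v^2 / (A^2 * s)" by (simp add: power_divide)
  also have "A^2 * s = A^2 - p^2" using A by (simp add: s_def field_simps power2_eq_square)
  also have "v^2 = (A^2 - p^2) * (3 + 3/4 * (A^2 + p^2))"
  proof -
    have e: "v^2 / 2 + Vp p = (u' t0)^2 / 2 + Vp (u t0)" using ys_energy[OF hs, of z t0] by (simp add: p_def v_def)
    then have "v^2 = 2 * (Vp A - Vp p)" using t0 by simp
    then show ?thesis by (simp add: Vp_def field_simps power2_eq_square power4_eq_xxxx)
  qed
  also have "(A^2 - p^2) * (3 + 3/4 * (A^2 + p^2)) / (A^2 - p^2) = 3 + 3/4 * (A^2 + p^2)"
  proof -
    have "A^2 - p^2 > 0" using p A by (simp add: power_strict_mono)
    then show ?thesis by simp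
  qed
  finally show ?thesis using l0 main p by blast
qed




lemma Vp_abs: "Vp \<bar>x\<bar> = Vp x"
  by (simp add: Vp_def)

lemma Vp_sq_le: "x^2 \<le> z^2 \<Longrightarrow> Vp x \<le> Vp z"
proof -
  assume a: "x^2 \<le> z^2"
  have "x^4 = (x^2)^2" "z^4 = (z^2)^2" by (simp_all add: power_mult[symmetric])
  moreover have "(x^2)^2 \<le> (z^2)^2" using power_mono[OF a, of 2] by simp
  ultimately show ?thesis using a unfolding Vp_def by simp
qed

lemma Vp_le_sq: "Vp x \<le> Vp z \<Longrightarrow> x^2 \<le> z^2"
proof (rule ccontr)
  assume a: "Vp x \<le> Vp z" "\<not> x^2 \<le> z^2"
  then have b: "z^2 < x^2" by simp
  have "x^4 = (x^2)^2" "z^4 = (z^2)^2" by (simp_all add: power_mult[symmetric])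
  moreover have "(z^2)^2 < (x^2)^2" using power_strict_mono[OF b, of 2] by simp
  ultimately have "Vp z < Vp x" using b unfolding Vp_def by simp
  then show False using a by simp
qed

theorem theorem4p1:
  fixes \<alpha> \<beta> :: real and y y' :: "real \<Rightarrow> real"
  assumes "(\<alpha>, \<beta>) \<noteq> (0, 0)"
    and "\<forall>t. (y has_real_derivative y' t) (at t)"
    and "\<forall>t. (y' has_real_derivative (- (3 * y t + 3/2 * (y t)^3))) (at t)"
    and "y 0 = \<alpha>" and "y' 0 = \<beta>"
  shows "((SUP t. \<bar>y t\<bar>) \<le> sqrt (10/21) \<longleftrightarrow> \<beta>^2/2 + 3/2 * \<alpha>^2 + 3/8 * \<alpha>^4 \<le> 235/294)
       \<and> ((SUP t. \<bar>y t\<bar>) \<le> sqrt (10/21) \<longrightarrow> hill_lyapunov_stable (\<lambda>t. 7 + 27/2 * (y t)^2))"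
proof -
  have hs: "ysol y y'" unfolding ysol_def using assms(2,3) by blast
  define E where "E = \<beta>^2/2 + 3/2 * \<alpha>^2 + 3/8 * \<alpha>^4"
  have en: "(y' t)^2 / 2 + Vp (y t) = E" for t
    using ys_energy[OF hs, of t 0] assms(4,5) by (simp add: E_def Vp_def)
  have E0: "E > 0"
  proof (cases "\<alpha> = 0")
    case True
    then have "\<beta> \<noteq> 0" using assms(1) by simp
    then show ?thesis using True by (simp add: E_def)
  next
    case False
    then have "\<alpha>^2 > 0" by simp
    moreover have "\<beta>^2 / 2 \<ge> 0" "3/8 * \<alpha>^4 \<ge> 0" by simp_all
    ultimately show ?thesis unfolding E_def by linarith
  qed
  obtain t0 where t0: "y' t0 = 0" using ys_crit[OF hs] by blast
  have Et0: "Vp (y t0) = E" using en[of t0] t0 by simp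
  define A where "A = \<bar>y t0\<bar>"
  have VA: "Vp A = E" using Et0 by (simp add: A_def Vp_abs)
  have A0: "A > 0"
  proof (rule ccontr)
    assume "\<not> A > 0"
    then have "y t0 = 0" by (simp add: A_def)
    then show False using Et0 E0 by (simp add: Vp_def)
  qed
  have ysq: "(y t)^2 \<le> A^2" for t
  proof -
    have "(y' t)^2 \<ge> 0" by simp
    then have "Vp (y t) \<le> Vp A" using en[of t] VA by linarith
    then show ?thesis by (rule Vp_le_sq)
  qed
  have yA: "\<bar>y t\<bar> \<le> A" for t
  proof -
    have "\<bar>y t\<bar> \<le> \<bar>A\<bar>" using ysq[of t] by (simp only: abs_le_square_iff)
    then show ?thesis using A0 by simp
  qed
  have bdd: "bdd_above (range (\<lambda>t. \<bar>y t\<bar>))" using yA by (intro bdd_aboveI) auto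
  define s0 where "s0 = sqrt (10/21 :: real)"
  have s02: "s0^2 = 10/21" by (simp add: s0_def)
  have s00: "s0 \<ge> 0" by (simp add: s0_def)
  have Vs0: "Vp s0 = 235/294"
  proof -
    have "s0^4 = (s0^2)^2" by (simp add: power_mult[symmetric])
    then have s4: "s0^4 = (10/21)^2" unfolding s02 .
    show ?thesis unfolding Vp_def s4 s02 by (simp add: power2_eq_square)
  qed
  have At0: "A \<le> (SUP t. \<bar>y t\<bar>)" unfolding A_def by (rule cSUP_upper[OF _ bdd]) simp
  have part1: "(SUP t. \<bar>y t\<bar>) \<le> s0 \<longleftrightarrow> E \<le> 235/294"
  proof
    assume "(SUP t. \<bar>y t\<bar>) \<le> s0"
    then have "A \<le> s0" using At0 by linarith
    then have "A^2 \<le> s0^2" using A0 by (intro power_mono) auto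
    then have "Vp A \<le> Vp s0" by (rule Vp_sq_le)
    then show "E \<le> 235/294" using VA Vs0 by simp
  next
    assume "E \<le> 235/294"
    have "\<bar>y t\<bar> \<le> s0" for t
    proof -
      have "(y' t)^2 \<ge> 0" by simp
      then have "Vp (y t) \<le> Vp s0" using en[of t] \<open>E \<le> 235/294\<close> Vs0 by linarith
      then have "(y t)^2 \<le> s0^2" by (rule Vp_le_sq)
      then have "\<bar>y t\<bar> \<le> \<bar>s0\<bar>" by (simp only: abs_le_square_iff)
      then show ?thesis using s00 by simp
    qed
    then show "(SUP t. \<bar>y t\<bar>) \<le> s0" by (intro cSUP_least) auto
  qed
  have part2: "hill_lyapunov_stable (\<lambda>t. 7 + 27/2 * (y t)^2)" if sup: "(SUP t. \<bar>y t\<bar>) \<le> s0"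
  proof -
    have "A \<le> s0" using At0 sup by linarith
    then have "A^2 \<le> s0^2" using A0 by (intro power_mono) auto
    then have A2: "A^2 \<le> 10/21" using s02 by simp
    obtain u u' where uu: "ysol u u'" "u t0 = A" "u' t0 = 0" "\<forall>t. (u t)^2 = (y t)^2"
    proof (cases "y t0 > 0")
      case True
      then show ?thesis using that[OF hs] t0 by (simp add: A_def)
    next
      case False
      then show ?thesis using that[OF ys_neg[OF hs]] t0 by (simp add: A_def)
    qed
    have uA: "\<bar>u t\<bar> \<le> A" for t
    proof -
      have "(u t)^2 \<le> A^2" using uu(4) ysq[of t] by simp
      then have "\<bar>u t\<bar> \<le> \<bar>A\<bar>" by (simp only: abs_le_square_iff)
      then show ?thesis using A0 by simp
    qed
    obtain t1 where t1: "t1 > t0" "u t1 = 0" "\<forall>t. t0 \<le> t \<and> t < t1 \<longrightarrow> u t > 0"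
        "\<forall>t. t0 < t \<and> t \<le> t1 \<longrightarrow> u' t < 0 \<and> u t < A"
      using ys_first_zero[OF uu(1) A0 uu(2,3)] by blast
    obtain k p where kp: "k > 0" "(t1 - t0) * k = pi / 2" "0 < p" "p < A" "k^2 = 3 + 3/4 * (A^2 + p^2)"
      using ys_time[OF uu(1) A0 uu(2,3) t1] by blast
    have r0: "u (2 * t0 - t) = u t" for t
    proof -
      have h: "ysol (\<lambda>t. u (2 * t0 - t)) (\<lambda>t. - u' (2 * t0 - t))" by (rule ys_refl[OF uu(1)])
      have "u t = (\<lambda>t. u (2 * t0 - t)) t"
        by (rule ys_uniq[OF uu(1) h, of A t0]) (use uA uu in auto)
      then show ?thesis by simp
    qed
    have r1: "- u (2 * t1 - t) = u t" for t
    proof -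
      have h: "ysol (\<lambda>t. - u (2 * t1 - t)) (\<lambda>t. - (- u' (2 * t1 - t)))" by (rule ys_neg[OF ys_refl[OF uu(1)]])
      have "u t = (\<lambda>t. - u (2 * t1 - t)) t"
        by (rule ys_uniq[OF uu(1) h, of A t1]) (use uA t1 in auto)
      then show ?thesis by simp
    qed
    define T where "T = 2 * (t1 - t0)"
    have uper: "u (t + T) = - u t" for t
    proof -
      have "u (t + T) = - u (2 * t1 - (t + T))" using r1[of "t + T"] by simp
      also have "2 * t1 - (t + T) = 2 * t0 - t" by (simp add: T_def)
      finally show ?thesis using r0[of t] by simp
    qed
    have per: "\<forall>t. (\<lambda>t. 7 + 27/2 * (y t)^2) (t + T) = (\<lambda>t. 7 + 27/2 * (y t)^2) t"
    proof
      fix t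
      have "(y (t + T))^2 = (y t)^2" using uu(4)[rule_format, of "t + T"] uu(4)[rule_format, of t] uper[of t] by simp
      then show "(\<lambda>t. 7 + 27/2 * (y t)^2) (t + T) = (\<lambda>t. 7 + 27/2 * (y t)^2) t" by simp
    qed
    have TT: "T > 0" using t1 by (simp add: T_def)
    have Tk: "T = pi / k" using kp(1,2) by (simp add: T_def field_simps)
    define wa where "wa = sqrt (7::real)"
    define wb where "wb = sqrt (7 + 27/2 * A^2)"
    have wa: "wa > 0" by (simp add: wa_def)
    have wb: "wb > 0" unfolding wb_def by (intro real_sqrt_gt_zero) (simp add: add_pos_nonneg)
    have wa2: "wa^2 = 7" by (simp add: wa_def)
    have wb2: "wb^2 = 7 + 27/2 * A^2" unfolding wb_def by (simp add: add_nonneg_nonneg)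
    have qa: "\<forall>t. wa^2 \<le> (\<lambda>t. 7 + 27/2 * (y t)^2) t" using wa2 by simp
    have qb: "\<forall>t. (\<lambda>t. 7 + 27/2 * (y t)^2) t \<le> wb^2" using wb2 ysq by simp
    have p2: "p^2 < A^2" "0 < p^2" using kp(3,4) by (simp_all add: power_strict_mono)
    have k7: "k^2 < 7" using kp(5) p2 A2 by simp
    have k4: "(2 * k)^2 = 4 * k^2" by (simp add: power_mult_distrib)
    have kk: "k^2 = 3 + 3/4 * A^2 + 3/4 * p^2" using kp(5) by (simp add: algebra_simps)
    have kwb: "wb^2 < (2 * k)^2" unfolding k4 using kk p2 A2 wb2 by linarith
    have "k^2 < wa^2" using k7 wa2 by simp
    then have "k < wa" using wa by (intro power_less_imp_less_base[of k 2 wa]) auto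
    then have Tlo: "pi / wa < T" unfolding Tk using kp(1) by (intro divide_strict_left_mono) (auto simp: mult_pos_pos)
    have "wb < 2 * k" using kwb kp(1) by (intro power_less_imp_less_base[of wb 2 "2 * k"]) auto
    then have "2 * pi / (2 * k) < 2 * pi / wb" using wb by (intro divide_strict_left_mono) (auto simp: mult_pos_pos)
    then have Thi: "T < 2 * pi / wb" unfolding Tk by simp
    show ?thesis by (rule hill_stable[OF TT per wa wb qa qb Tlo Thi])
  qed
  show ?thesis using part1 part2 unfolding E_def s0_def by blast
qed



end
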